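(* Assume the setting below, and that every nonempty intersection $\bigcap_{v\in A}Z_v\cap\bigcap_{\rho\in B}W_\rho$ ($\emptyset\neq A\subseteq V_f$, $B\subseteq V_\infty$) is irreducible. Let $\tau$ be a cell and let $f_\tau\in\operatorname{Rat}(X)$ satisfy: (i) $\operatorname{trop}(f_\tau)\equiv0$ on $\Theta_\tau$; (ii) $\operatorname{trop}(f_\tau)>0$ on $\Theta_\eta\setminus\Theta_\tau$ for every cell $\eta$; (iii) for every cell $\eta$, $\operatorname{trop}(f_\tau)|_{\Theta_\eta}$ is concave and its slope near infinity along every ray $\{u+te_\rho\}\subseteq\Theta_\eta$ with $\rho\in B_\eta\setminus B_\tau$ is positive. Then for every cell $\eta$ and every half-line $\{p+tw:t\ge0\}\subseteq\Theta_\eta$ with $w\in\mathbb R^{B_\eta}_{\ge0}$ having $w_\rho>0$ for some $\rho\in B_\eta\setminus B_\tau$ (i.e. a half-line of $\Theta_\eta$ not parallel to $\Theta_\tau$), the slope near infinity of $\operatorname{trop}(f_\tau)$ along this half-line is positive.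
   Context: Setting. Let $K$ be a complete discretely valued field with valuation $\nu_K\colon K\to\mathbb Z\cup\{\infty\}$, valuation ring $R$, uniformizer $\varpi$ with $\nu_K(\varpi)=1$, residue field $\kappa$, and absolute value $|a|=\exp(-\nu_K(a))$. Let $X$ be a smooth projective geometrically connected variety of dimension $d$ over $K$. A strictly semistable pair of $X$ is a pair $(\mathscr X,\mathcal H)$ where $\mathscr X$ is an integral projective flat $R$-scheme with an isomorphism $\mathscr X\times_R K\cong X$, $\mathcal H=\sum_{\rho\in V_\infty}W_\rho$ is a sum of pairwise distinct irreducible hypersurfaces $W_\rho$ of $\mathscr X$, and $\mathscr X$ is covered by open subsets $\mathcal U$ admitting étale morphisms $\psi\colon\mathcal U\to\operatorname{Spec}R[x_0,\dots,x_d]/(x_0\cdots x_r-\varpi)$ ($0\le r\le d$) such that each $W_\rho\cap\mathcal U$ is empty or is defined by $\psi^*(x_j)$ for some $r+1\le j\le d$. Let $Z_v$, $v\in V_f$, be the irreducible components of the special fiber $\mathscr X_\kappa$. Strata and dual complex. Under the irreducibility assumption of the claim, the cells $\tau$ of the dual complex $\Delta(\mathscr X,\mathcal H)$ correspond to the pairs $(A_\tau,B_\tau)$ with $\emptyset\ne A_\tau\subseteq V_f$, $B_\tau\subseteq V_\infty$ and $S_\tau:=\bigcap_{v\in A_\tau}Z_v\cap\bigcap_{\rho\in B_\tau}W_\rho\neq\emptyset$; let $\xi_\tau$ be the generic point of $S_\tau$. To $\tau$ is attached $\Theta_\tau=\sigma^{A_\tau}\times\mathbb R_{\ge0}^{B_\tau}\subseteq\mathbb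 R^{A_\tau\cup B_\tau}$, where $\sigma^A=\{u\in\mathbb R^A_{\ge0}:\sum_{v}u_v=1\}$, and $\Theta_\tau$ is glued to $\Theta_\eta$ along the common face $\Theta_{\tau\cap\eta}$ (indexed by $A_\tau\cap A_\eta$, $B_\tau\cap B_\eta$), $\Theta_\sigma\subseteq\Theta_\tau$ being the face where the coordinates outside $A_\sigma\cup B_\sigma$ vanish; this gives $|\Delta(\mathscr X,\mathcal H)|$. The slope near infinity of a piecewise affine $F$ along $\{p+tw\}$ is $\frac{d}{dt}F(p+tw)$ for $t\gg0$. Tropicalization. For $u\in\Theta_\tau$, choose local equations $z_v$ ($v\in A_\tau$) of $Z_v$ and $w_\rho$ ($\rho\in B_\tau$) of $W_\rho$ at $\xi_\tau$; every $f$ in the completion $\widehat{\mathcal O}_{\mathscr X,\xi_\tau}$ has an admissible expansion $f=\sum_{m\in\mathbb Z_{\ge0}^{A_\tau\cup B_\tau}}a_m\prod z_v^{m_v}\prod w_\rho^{m_\rho}$ with each $a_m$ zero or a unit, and $\nu_u(f)=\min\{\sum_v u_vm_v+\sum_\rho u_\rho m_\rho: a_m\neq0\}$ is independent of choices, extends to a valuation on $\operatorname{Rat}(X)$ extending $\nu_K$, and is compatible with faces. Set $\operatorname{trop}(f)(u)=\nu_u(f)$. *)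

theory Defs
  imports "HOL-Analysis.Analysis"
begin

text \<open>Coordinates are indexed by V_f + V_infinity: Inl v for v in V_f, Inr rho for rho in V_infinity.
  A cell tau is given by the pair (A_tau, B_tau); all cells are realised in the
  common ambient space of functions ('v + 'r) => real, where the gluing along common
  faces becomes set-theoretic intersection.\<close>

type_synonym ('v, 'r) pt = "('v + 'r) \<Rightarrow> real"

definition cell_coords :: "'v set \<times> 'r set \<Rightarrow> ('v + 'r) set" where
  "cell_coords c = Inl ` fst c \<union> Inr ` snd c"

text \<open>Theta_tau = sigma^{A_tau} x R_{>=0}^{B_tau}, coordinates outside A_tau, B_tau vanish.\<close>
definition Theta :: "'v set \<times> 'r set \<Rightarrow> ('v, 'r) pt set" where
  "Theta c = {u. (\<forall>x. 0 \<le> u x) \<and> (\<forall>x. x \<notin> cell_coords c \<longrightarrow> u x = 0)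
                 \<and> (\<Sum>v\<in>fst c. u (Inl v)) = 1}"

definition dual_complex :: "'v set \<Rightarrow> 'r set \<Rightarrow> ('v set \<times> 'r set) set \<Rightarrow> bool" where
  "dual_complex Vf Vinf C \<longleftrightarrow> finite Vf \<and> finite Vinf \<and>
     (\<forall>(A,B)\<in>C. A \<noteq> {} \<and> A \<subseteq> Vf \<and> B \<subseteq> Vinf) \<and>
     (\<forall>(A,B)\<in>C. \<forall>A' B'. A' \<noteq> {} \<and> A' \<subseteq> A \<and> B' \<subseteq> B \<longrightarrow> (A',B') \<in> C)"

definition pairing :: "('v + 'r) set \<Rightarrow> ('v, 'r) pt \<Rightarrow> (('v + 'r) \<Rightarrow> nat) \<Rightarrow> real" where
  "pairing I u m = (\<Sum>x\<in>I. u x * real (m x))"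

text \<open>F is the tropicalization trop(f) of a rational function f = g/h on the cell c:
  with admissible expansions of g and h at xi_c, nu_u(g) (resp. nu_u(h)) is the minimum of
  the pairings of u with the (finitely many minimal) exponents m having a_m nonzero.\<close>
definition trop_on_cell :: "(('v, 'r) pt \<Rightarrow> real) \<Rightarrow> 'v set \<times> 'r set \<Rightarrow> bool" where
  "trop_on_cell F c \<longleftrightarrow> (\<exists>M1 M2.
      finite M1 \<and> M1 \<noteq> {} \<and> finite M2 \<and> M2 \<noteq> {} \<and>
      (\<forall>m\<in>M1 \<union> M2. \<forall>x. x \<notin> cell_coords c \<longrightarrow> m x = 0) \<and>
      (\<forall>u\<in>Theta c. F u = Min (pairing (cell_coords c) u ` M1)
                             - Min (pairing (cell_coords c) u ` M2)))"

definition concave_on_cell :: "(('v, 'r) pt \<Rightarrow> real) \<Rightarrow> ('v, 'r) pt set \<Rightarrow> bool" where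
  "concave_on_cell F S \<longleftrightarrow> (\<forall>x\<in>S. \<forall>y\<in>S. \<forall>a::real. 0 \<le> a \<and> a \<le> 1 \<longrightarrow>
      (1 - a) * F x + a * F y \<le> F (\<lambda>i. (1 - a) * x i + a * y i))"

definition slope_at_infinity :: "(('v, 'r) pt \<Rightarrow> real) \<Rightarrow> ('v, 'r) pt \<Rightarrow> ('v, 'r) pt \<Rightarrow> real \<Rightarrow> bool" where
  "slope_at_infinity F p w s \<longleftrightarrow>
     (\<forall>\<^sub>F t in at_top. ((\<lambda>t. F (\<lambda>i. p i + t * w i)) has_real_derivative s) (at t))"

definition unit_vec :: "'r \<Rightarrow> ('v, 'r) pt" where
  "unit_vec \<rho> = (\<lambda>x. if x = Inr \<rho> then 1 else 0)"

end

theory Submission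
  imports Defs
begin

lemma min_affine:
  fixes a1 b1 a2 b2 :: real
  shows "\<exists>T \<alpha> \<beta>. \<forall>t>T. min (a1 + t*b1) (a2 + t*b2) = \<alpha> + \<beta>*t"
proof (cases "b1 = b2")
  case True
  show ?thesis proof (rule exI[of _ 0], rule exI[of _ "min a1 a2"], rule exI[of _ b1]) qed (use True in \<open>auto simp: min_def algebra_simps\<close>)
next
  case False
  show ?thesis
  proof (cases "b1 < b2")
    case True
    show ?thesis
    proof (rule exI[of _ "(a1-a2)/(b2-b1)"], rule exI[of _ a1], rule exI[of _ b1], intro allI impI)
      fix t assume "t > (a1-a2)/(b2-b1)"
      then have "t*(b2-b1) > a1 - a2" using True by (simp add: field_simps)
      then have "a1 + t*b1 \<le> a2 + t*b2" by (simp add: algebra_simps)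
      then show "min (a1 + t*b1) (a2 + t*b2) = a1 + b1*t" by (metis min.absorb1 mult.commute)
    qed
  next
    case F: False
    with False have lt: "b2 < b1" by simp
    show ?thesis
    proof (rule exI[of _ "(a2-a1)/(b1-b2)"], rule exI[of _ a2], rule exI[of _ b2], intro allI impI)
      fix t assume "t > (a2-a1)/(b1-b2)"
      then have "t*(b1-b2) > a2 - a1" using lt by (simp add: field_simps)
      then have "a2 + t*b2 \<le> a1 + t*b1" by (simp add: algebra_simps)
      then show "min (a1 + t*b1) (a2 + t*b2) = a2 + b2*t" by (metis min.absorb2 mult.commute)
    qed
  qed
qed

lemma Min_affine:
  fixes a b :: "'m \<Rightarrow> real"
  assumes "finite M" "M \<noteq> {}"
  shows "\<exists>T \<alpha> \<beta>. \<forall>t>T. Min ((\<lambda>m. a m + t * b m) ` M) = \<alpha> + \<beta>*t"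
  using assms
proof (induction M rule: finite_ne_induct)
  case (singleton x)
  show ?case proof (rule exI[of _ 0], rule exI[of _ "a x"], rule exI[of _ "b x"]) qed (auto simp: algebra_simps)
next
  case (insert x M)
  obtain T \<alpha> \<beta> where T: "\<forall>t>T. Min ((\<lambda>m. a m + t * b m) ` M) = \<alpha> + \<beta>*t" using insert by blast
  obtain T' \<alpha>' \<beta>' where T': "\<forall>t>T'. min (a x + t * b x) (\<alpha> + t*\<beta>) = \<alpha>' + \<beta>'*t"
    using min_affine by blast
  show ?case
  proof (rule exI[of _ "max T T'"], rule exI[of _ \<alpha>'], rule exI[of _ \<beta>'], intro allI impI)
    fix t assume "t > max T T'"
    then have "Min ((\<lambda>m. a m + t * b m) ` insert x M) = min (a x + t * b x) (\<alpha> + t*\<beta>)"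
      using T insert by (simp add: Min_insert algebra_simps)
    then show "Min ((\<lambda>m. a m + t * b m) ` insert x M) = \<alpha>' + \<beta>'*t" using T' \<open>t > max T T'\<close> by simp
  qed
qed

lemma pairing_ray: "pairing I (\<lambda>i. p i + t * w i) m = pairing I p m + t * pairing I w m"
  unfolding pairing_def by (simp add: algebra_simps sum.distrib sum_distrib_left)

lemma F_affine:
  assumes "trop_on_cell F \<eta>" and ray: "\<forall>t\<ge>0. (\<lambda>i. p i + t * w i) \<in> Theta \<eta>"
  shows "\<exists>T \<alpha> \<beta>. \<forall>t>T. F (\<lambda>i. p i + t * w i) = \<alpha> + \<beta>*t"
proof -
  obtain M1 M2 where HM: "finite M1 \<and> M1 \<noteq> {} \<and> finite M2 \<and> M2 \<noteq> {} \<and>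
      (\<forall>m\<in>M1 \<union> M2. \<forall>x. x \<notin> cell_coords \<eta> \<longrightarrow> m x = 0) \<and>
      (\<forall>u\<in>Theta \<eta>. F u = Min (pairing (cell_coords \<eta>) u ` M1)
                             - Min (pairing (cell_coords \<eta>) u ` M2))"
    using assms(1) unfolding trop_on_cell_def by (elim exE) (rule that)
  note HM2 = HM[THEN conjunct2] and HM2a = HM[THEN conjunct2, THEN conjunct2]
  have M: "finite M1" "M1 \<noteq> {}" "finite M2" "M2 \<noteq> {}"
    by (rule HM[THEN conjunct1], rule HM2[THEN conjunct1], rule HM2a[THEN conjunct1], rule HM2a[THEN conjunct2, THEN conjunct1])
  have FM: "\<forall>u\<in>Theta \<eta>. F u = Min (pairing (cell_coords \<eta>) u ` M1) - Min (pairing (cell_coords \<eta>) u ` M2)"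
    by (rule HM2a[THEN conjunct2, THEN conjunct2, THEN conjunct2])
  let ?I = "cell_coords \<eta>"
  obtain T1 a1 b1 where T1: "\<forall>t>T1. Min ((\<lambda>m. pairing ?I p m + t * pairing ?I w m) ` M1) = a1 + b1*t"
    using Min_affine[OF M(1,2), where a="\<lambda>m. pairing ?I p m" and b="\<lambda>m. pairing ?I w m"] by blast
  obtain T2 a2 b2 where T2: "\<forall>t>T2. Min ((\<lambda>m. pairing ?I p m + t * pairing ?I w m) ` M2) = a2 + b2*t"
    using Min_affine[OF M(3,4), where a="\<lambda>m. pairing ?I p m" and b="\<lambda>m. pairing ?I w m"] by blast
  show ?thesis
  proof (rule exI[of _ "max 0 (max T1 T2)"], rule exI[of _ "a1 - a2"], rule exI[of _ "b1 - b2"], intro allI impI)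
    fix t assume t: "t > max 0 (max T1 T2)"
    have mem: "(\<lambda>i. p i + t * w i) \<in> Theta \<eta>" using ray t by simp
    have t1: "t > T1" and t2: "t > T2" using t by auto
    have "F (\<lambda>i. p i + t * w i) = Min (pairing ?I (\<lambda>i. p i + t * w i) ` M1) - Min (pairing ?I (\<lambda>i. p i + t * w i) ` M2)"
      using FM mem by blast
    also have "\<dots> = Min ((\<lambda>m. pairing ?I p m + t * pairing ?I w m) ` M1) - Min ((\<lambda>m. pairing ?I p m + t * pairing ?I w m) ` M2)"
      by (simp add: pairing_ray)
    also have "\<dots> = (a1 + b1*t) - (a2 + b2*t)" by (simp only: T1[rule_format, OF t1] T2[rule_format, OF t2])
    also have "\<dots> = (a1 - a2) + (b1 - b2)*t" by (simp add: algebra_simps)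
    finally show "F (\<lambda>i. p i + t * w i) = (a1 - a2) + (b1 - b2)*t" .
  qed
qed

lemma affine_deriv:
  assumes "\<forall>t>T. g t = \<alpha> + \<beta>*t"
  shows "\<forall>t>T. (g has_real_derivative \<beta>) (at t)"
proof (intro allI impI)
  fix t assume t: "t > T"
  have "((\<lambda>t. \<alpha> + \<beta>*t) has_real_derivative \<beta>) (at t)"
    by (auto intro!: derivative_eq_intros)
  then show "(g has_real_derivative \<beta>) (at t)"
    by (rule has_field_derivative_transform_within_open[of _ _ _ "{T<..}"]) (use t assms in auto)
qed

lemma Theta_ray:
  assumes "p \<in> Theta \<eta>" "\<forall>x. 0 \<le> v x" "\<forall>x. x \<notin> Inr ` snd \<eta> \<longrightarrow> v x = 0" "s \<ge> 0"
  shows "(\<lambda>i. p i + s * v i) \<in> Theta \<eta>"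
proof -
  have "Inr ` snd \<eta> \<subseteq> cell_coords \<eta>" by (auto simp: cell_coords_def)
  moreover have "\<forall>a. v (Inl a) = 0" using assms(3) by auto
  moreover have "\<forall>x. x \<notin> cell_coords \<eta> \<longrightarrow> v x = 0" using assms(3) calculation(1) by blast
  ultimately show ?thesis using assms unfolding Theta_def by auto
qed

theorem corollary4p6:
  fixes Vf :: "'v set" and Vinf :: "'r set" and C :: "('v set \<times> 'r set) set"
    and F :: "('v, 'r) pt \<Rightarrow> real" and \<tau> :: "'v set \<times> 'r set"
  assumes cx: "dual_complex Vf Vinf C"
    and tau: "\<tau> \<in> C"
    and trop: "\<forall>\<eta>\<in>C. trop_on_cell F \<eta>"
    and i: "\<forall>u\<in>Theta \<tau>. F u = 0"
    and ii: "\<forall>\<eta>\<in>C. \<forall>u\<in>Theta \<eta> - Theta \<tau>. F u > 0"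
    and iii_conc: "\<forall>\<eta>\<in>C. concave_on_cell F (Theta \<eta>)"
    and iii_slope: "\<forall>\<eta>\<in>C. \<forall>\<rho>\<in>snd \<eta> - snd \<tau>. \<forall>u.
                      (\<forall>t\<ge>0. (\<lambda>i. u i + t * unit_vec \<rho> i) \<in> Theta \<eta>) \<longrightarrow>
                      (\<exists>s>0. slope_at_infinity F u (unit_vec \<rho>) s)"
  shows "\<forall>\<eta>\<in>C. \<forall>p w.
           (\<forall>t\<ge>0. (\<lambda>i. p i + t * w i) \<in> Theta \<eta>) \<and>
           (\<forall>x. 0 \<le> w x) \<and> (\<forall>x. x \<notin> Inr ` snd \<eta> \<longrightarrow> w x = 0) \<and>
           (\<exists>\<rho>\<in>snd \<eta> - snd \<tau>. w (Inr \<rho>) > 0)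
           \<longrightarrow> (\<exists>s>0. slope_at_infinity F p w s)"
proof (intro ballI allI impI)
  fix \<eta> p w
  assume eta: "\<eta> \<in> C"
  assume H: "(\<forall>t\<ge>0. (\<lambda>i. p i + t * w i) \<in> Theta \<eta>) \<and>
           (\<forall>x. 0 \<le> w x) \<and> (\<forall>x. x \<notin> Inr ` snd \<eta> \<longrightarrow> w x = 0) \<and>
           (\<exists>\<rho>\<in>snd \<eta> - snd \<tau>. w (Inr \<rho>) > 0)"
  then have ray: "\<forall>t\<ge>0. (\<lambda>i. p i + t * w i) \<in> Theta \<eta>" and wpos: "\<forall>x. 0 \<le> w x"
    and wsupp: "\<forall>x. x \<notin> Inr ` snd \<eta> \<longrightarrow> w x = 0" by auto
  obtain \<rho>0 where r0: "\<rho>0 \<in> snd \<eta> - snd \<tau>" and c0: "w (Inr \<rho>0) > 0" using H by blast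
  define c where "c = w (Inr \<rho>0)"
  define e :: "('v,'r) pt" where "e = unit_vec \<rho>0"
  have pin: "p \<in> Theta \<eta>" using ray[rule_format, of 0] by simp
  have epos: "\<forall>x. 0 \<le> e x" and esupp: "\<forall>x. x \<notin> Inr ` snd \<eta> \<longrightarrow> e x = 0"
    using r0 by (auto simp: e_def unit_vec_def)
  have raye: "\<forall>t\<ge>0. (\<lambda>i. p i + t * unit_vec \<rho>0 i) \<in> Theta \<eta>"
    using Theta_ray[OF pin epos esupp] by (simp add: e_def)
  have raye2: "\<forall>t\<ge>0. (\<lambda>i. p i + t * e i) \<in> Theta \<eta>"
    using Theta_ray[OF pin epos esupp] by simp
  obtain s0 where s0: "s0 > 0" "slope_at_infinity F p (unit_vec \<rho>0) s0"
    using iii_slope eta r0 raye by blast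
  obtain T' \<alpha>' \<beta>' where T': "\<forall>t>T'. F (\<lambda>i. p i + t * e i) = \<alpha>' + \<beta>'*t"
    using F_affine[OF trop[rule_format, OF eta] raye2] by (elim exE) (rule that)
  have D': "\<forall>t>T'. ((\<lambda>t. F (\<lambda>i. p i + t * e i)) has_real_derivative \<beta>') (at t)"
    using affine_deriv[where T=T' and g="\<lambda>t. F (\<lambda>i. p i + t * e i)" and \<alpha>=\<alpha>' and \<beta>=\<beta>'] T' by simp
  obtain N where N: "\<forall>t\<ge>N. ((\<lambda>t. F (\<lambda>i. p i + t * e i)) has_real_derivative s0) (at t)"
    using s0(2) unfolding slope_at_infinity_def eventually_at_top_linorder e_def by blast
  have "\<beta>' = s0"
    using DERIV_unique[OF D'[rule_format, of "max N (T'+1)"] N[rule_format, of "max N (T'+1)"]] by simp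
  with s0 have b'pos: "\<beta>' > 0" by simp
  obtain T \<alpha> \<beta> where T: "\<forall>t>T. F (\<lambda>i. p i + t * w i) = \<alpha> + \<beta>*t"
    using F_affine[OF trop[rule_format, OF eta] ray] by (elim exE) (rule that)
  have D: "\<forall>t>T. ((\<lambda>t. F (\<lambda>i. p i + t * w i)) has_real_derivative \<beta>) (at t)"
    using affine_deriv[where T=T and g="\<lambda>t. F (\<lambda>i. p i + t * w i)" and \<alpha>=\<alpha> and \<beta>=\<beta>] T by simp
  have slope: "slope_at_infinity F p w \<beta>"
    unfolding slope_at_infinity_def eventually_at_top_linorder
    proof (rule exI[of _ "T+1"]) qed (use D in auto)
  define w' where "w' = (\<lambda>i. w i - c * e i)"
  have w'pos: "\<forall>x. 0 \<le> w' x" using wpos by (auto simp: w'_def e_def unit_vec_def c_def)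
  have w'supp: "\<forall>x. x \<notin> Inr ` snd \<eta> \<longrightarrow> w' x = 0" using wsupp esupp by (auto simp: w'_def)
  have Fnn: "\<forall>u\<in>Theta \<eta>. F u \<ge> 0"
  proof
    fix u assume u: "u \<in> Theta \<eta>"
    show "F u \<ge> 0"
    proof (cases "u \<in> Theta \<tau>")
      case True then show ?thesis using i by simp
    next
      case False then have "F u > 0" using ii eta u by blast
      then show ?thesis by simp
    qed
  qed
  have cpos: "c > 0" using c0 c_def by simp
  define T0 where "T0 = max 0 (max T (T'/(2*c)))"
  have ineq: "\<alpha> + \<beta>*t \<ge> \<alpha>'/2 + (\<beta>'*c)*t" if t: "t > T0" for t
  proof -
    have t0: "t > 0" "t > T" "t > T'/(2*c)" using t by (auto simp: T0_def)
    have "2*c*t > T'" using t0(3) cpos by (simp add: field_simps)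
    then have Fe: "F (\<lambda>i. p i + (2*c*t) * e i) = \<alpha>' + \<beta>'*(2*c*t)" using T' by blast
    have x: "(\<lambda>i. p i + (2*t) * w' i) \<in> Theta \<eta>" using Theta_ray[OF pin w'pos w'supp] t0 by simp
    have y: "(\<lambda>i. p i + (2*c*t) * e i) \<in> Theta \<eta>" using Theta_ray[OF pin epos esupp] t0 cpos by simp
    have cc: "\<forall>a::real. 0 \<le> a \<and> a \<le> 1 \<longrightarrow> (1 - a) * F (\<lambda>i. p i + (2*t) * w' i) + a * F (\<lambda>i. p i + (2*c*t) * e i)
        \<le> F (\<lambda>i. (1 - a) * (p i + (2*t) * w' i) + a * (p i + (2*c*t) * e i))"
      using iii_conc eta x y unfolding concave_on_cell_def by blast
    have conc: "(1 - 1/2) * F (\<lambda>i. p i + (2*t) * w' i) + (1/2) * F (\<lambda>i. p i + (2*c*t) * e i)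
        \<le> F (\<lambda>i. (1 - 1/2) * (p i + (2*t) * w' i) + (1/2) * (p i + (2*c*t) * e i))"
      using cc[rule_format, of "1/2"] by simp
    have eq: "(\<lambda>i. (1 - 1/2) * (p i + (2*t) * w' i) + (1/2) * (p i + (2*c*t) * e i)) = (\<lambda>i. p i + t * w i)"
      by (auto simp: w'_def algebra_simps)
    have "F (\<lambda>i. p i + (2*t) * w' i) \<ge> 0" using Fnn x by blast
    moreover have "F (\<lambda>i. p i + (2*t) * w' i)/2 + (\<alpha>' + \<beta>'*(2*c*t))/2 \<le> F (\<lambda>i. p i + t * w i)"
      using conc eq Fe by simp
    ultimately have "F (\<lambda>i. p i + t * w i) \<ge> (\<alpha>' + \<beta>'*(2*c*t))/2" by linarith
    then show ?thesis using T t0 by (simp add: algebra_simps)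
  qed
  have "\<beta> \<ge> \<beta>'*c"
  proof (rule ccontr)
    assume "\<not> \<beta> \<ge> \<beta>'*c"
    then have d: "\<beta>'*c - \<beta> > 0" by simp
    define t where "t = T0 + 1 + \<bar>\<alpha> - \<alpha>'/2\<bar> / (\<beta>'*c - \<beta>)"
    have "\<bar>\<alpha> - \<alpha>'/2\<bar> / (\<beta>'*c - \<beta>) \<ge> 0" using d by simp
    then have tT: "t > T0" by (simp add: t_def)
    have "(\<beta>'*c - \<beta>) * t = (\<beta>'*c - \<beta>) * (T0 + 1) + \<bar>\<alpha> - \<alpha>'/2\<bar>"
      using d by (simp add: t_def field_simps)
    moreover have "T0 \<ge> 0" by (simp add: T0_def)
    ultimately have "(\<beta>'*c - \<beta>) * t > \<alpha> - \<alpha>'/2" using d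
      by (smt (verit) mult_pos_pos)
    with ineq[OF tT] show False by (simp add: algebra_simps)
  qed
  then have "\<beta> > 0" using b'pos cpos by (smt (verit) mult_pos_pos)
  with slope show "\<exists>s>0. slope_at_infinity F p w s" by blast
qed

end
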